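(* Let $U=U_1\times\cdots\times U_m$ with $U_i\subseteq\mathbb{R}^p$ be convex, $C\subseteq\mathbb{R}^{mp}$, $\overline{U}=U\cap C$, with $0\in\overline{U}$. Let $b\in\mathbb{R}^m$, let $f_1:\mathbb{R}^{n_1}\to\mathbb{R}$, $f_2:\mathbb{R}^{n_2}\to\mathbb{R}$ be convex with $f_1(0)=f_2(0)=0$, and for each $i\in[m]$ let $g_i(x,y,u_i)$ be concave in $(x,y)$ and convex in $u_i$, with $g_i(0,0,u_i)\ge0$ for all $u\in\overline{U}$ and $g_i(x,y,0)\le0$ for all feasible $x,y$. For a set $S$ define $$z^{\rm ad}(S)=\sup_{x,\ y:S\to\mathbb{R}^{n_2}}\Big\{f_1(x)+\inf_{u\in S}f_2(y(u)):\ g_i(x,y(u),u_i)\le b_i\ \forall u\in S,\ \forall i\Big\},$$ $$z^{\rm st}(S)=\sup_{x,y}\{f_1(x)+f_2(y):\ g_i(x,y,u_i)\le b_i\ \forall u\in S,\ \forall i\},$$ and $z_{\rm aro}=z^{\rm ad}(U)$, $z_{\rm acp}=z^{\rm ad}(\overline{U})$, $z_{\rm ro}=z^{\rm st}(U)$, $z_{\rm cp}=z^{\rm st}(\overline{U})$. Let $\gamma_{\rm ro}=\gamma(U,\Pi(\overline{U}))$ and $\gamma_{\rm aro}=\gamma(U,\overline{U})$. If $z_{\rm acp}>0$ and $z_{\rm ro}<\infty$, then $$\frac{z_{\rm cp}}{z_{\rm ro}}\ge\frac{1}{\gamma_{\rm ro}},\qquad\frac{z_{\rm acp}}{z_{\rm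 aro}}\ge\frac{1}{\gamma_{\rm aro}}.$$ Furthermore, the bounds are tight.
   Context: $u=(u_1,\dots,u_m)$ with $u_i\in\mathbb{R}^p$; $\Pi_i(S)$ is the projection of $S$ onto the $i$-th block, $\Pi(S)=\Pi_1(S)\times\cdots\times\Pi_m(S)$. For $r\ge0$, $rS=\{rx:x\in S\}$; $\gamma(S_1,S_2)=\min\{\gamma\ge0:S_2\subseteq\gamma S_1\}$. *)

theory Defs
  imports "HOL-Analysis.Analysis"
begin

text \<open>Uncertainty vectors u = (u_1,...,u_m), u_i in R^p, are modelled as
  elements of real^'p^'m (block i is u $ i).  Decisions x in R^n1, y in R^n2.\<close>

definition prod_set :: "('m::finite \<Rightarrow> (real^'p::finite) set) \<Rightarrow> (real^'p^'m) set" where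
  "prod_set Ui = {u. \<forall>i. u $ i \<in> Ui i}"

definition block_proj :: "(real^'p::finite^'m::finite) set \<Rightarrow> 'm \<Rightarrow> (real^'p) set" where
  "block_proj S i = (\<lambda>u. u $ i) ` S"

definition Pi_proj :: "(real^'p::finite^'m::finite) set \<Rightarrow> (real^'p^'m) set" where
  "Pi_proj S = prod_set (block_proj S)"

definition gauge_gamma :: "'a::real_vector set \<Rightarrow> 'a set \<Rightarrow> real" where
  "gauge_gamma S1 S2 = Inf {r. r \<ge> 0 \<and> S2 \<subseteq> (\<lambda>x. r *\<^sub>R x) ` S1}"

definition z_ad ::
  "real^'m::finite \<Rightarrow> (real^'n1::finite \<Rightarrow> real) \<Rightarrow> (real^'n2::finite \<Rightarrow> real)
   \<Rightarrow> ('m \<Rightarrow> real^'n1 \<Rightarrow> real^'n2 \<Rightarrow> real^'p::finite \<Rightarrow> real) \<Rightarrow> (real^'p^'m) set \<Rightarrow> ereal" where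
  "z_ad b f1 f2 g S = Sup {ereal (f1 x) + (INF u\<in>S. ereal (f2 (y u))) | x y.
      \<forall>u\<in>S. \<forall>i. g i x (y u) (u $ i) \<le> b $ i}"

definition z_st ::
  "real^'m::finite \<Rightarrow> (real^'n1::finite \<Rightarrow> real) \<Rightarrow> (real^'n2::finite \<Rightarrow> real)
   \<Rightarrow> ('m \<Rightarrow> real^'n1 \<Rightarrow> real^'n2 \<Rightarrow> real^'p::finite \<Rightarrow> real) \<Rightarrow> (real^'p^'m) set \<Rightarrow> ereal" where
  "z_st b f1 f2 g S = Sup {ereal (f1 x + f2 y) | x y.
      \<forall>u\<in>S. \<forall>i. g i x y (u $ i) \<le> b $ i}"

text \<open>Standing hypotheses of the theorem (feasible x,y range over all of R^n1 x R^n2).\<close>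
definition std_hyps ::
  "('m::finite \<Rightarrow> (real^'p::finite) set) \<Rightarrow> (real^'p^'m) set \<Rightarrow> real^'m
   \<Rightarrow> (real^'n1::finite \<Rightarrow> real) \<Rightarrow> (real^'n2::finite \<Rightarrow> real)
   \<Rightarrow> ('m \<Rightarrow> real^'n1 \<Rightarrow> real^'n2 \<Rightarrow> real^'p \<Rightarrow> real) \<Rightarrow> bool" where
  "std_hyps Ui C b f1 f2 g \<longleftrightarrow>
     (\<forall>i. convex (Ui i)) \<and>
     0 \<in> prod_set Ui \<inter> C \<and>
     convex_on UNIV f1 \<and> convex_on UNIV f2 \<and> f1 0 = 0 \<and> f2 0 = 0 \<and>
     (\<forall>i w. concave_on UNIV (\<lambda>z. g i (fst z) (snd z) w)) \<and>
     (\<forall>i x y. convex_on UNIV (\<lambda>w. g i x y w)) \<and>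
     (\<forall>i. \<forall>u\<in>prod_set Ui \<inter> C. g i 0 0 (u $ i) \<ge> 0) \<and>
     (\<forall>i x y. g i x y 0 \<le> 0)"

end

theory Submission
  imports Defs
begin


lemma key:
  assumes h: "std_hyps Ui C b f1 f2 g" and r: "0 < r" "r \<le> 1"
    and c: "g i x y ((1/r) *\<^sub>R w) \<le> c" and w0: "0 \<le> g i 0 0 w"
  shows "g i ((1/r) *\<^sub>R x) ((1/r) *\<^sub>R y) w \<le> c"
proof -
  define v where "v = (1/r) *\<^sub>R w"
  define x' where "x' = (1/r) *\<^sub>R x"
  define y' where "y' = (1/r) *\<^sub>R y"
  have wv: "w = (1 - r) *\<^sub>R 0 + r *\<^sub>R v" using r by (simp add: v_def)
  have cx: "\<And>a b. convex_on UNIV (\<lambda>w. g i a b w)" using h by (simp add: std_hyps_def)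
  have g0: "\<And>a b. g i a b 0 \<le> 0" using h by (simp add: std_hyps_def)
  have cc: "concave_on UNIV (\<lambda>z. g i (fst z) (snd z) v)" using h by (simp add: std_hyps_def)
  have h1: "g i x' y' w \<le> (1 - r) * g i x' y' 0 + r * g i x' y' v"
    unfolding wv by (rule convex_onD[OF cx]) (use r in auto)
  have h2: "g i 0 0 w \<le> (1 - r) * g i 0 0 0 + r * g i 0 0 v"
    unfolding wv by (rule convex_onD[OF cx]) (use r in auto)
  have h3: "g i (fst ((1 - r) *\<^sub>R (0,0) + r *\<^sub>R (x',y'))) (snd ((1 - r) *\<^sub>R (0,0) + r *\<^sub>R (x',y'))) v
      \<ge> (1 - r) * g i (fst (0,0)) (snd (0,0)) v + r * g i (fst (x',y')) (snd (x',y')) v"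
    using concave_onD[OF cc, of r "(0,0)" "(x',y')"] r by simp
  have xy: "(1 - r) *\<^sub>R (0,0) + r *\<^sub>R (x',y') = (x, y)" using r by (simp add: x'_def y'_def)
  have gv0: "0 \<le> g i 0 0 v"
  proof -
    have "0 \<le> (1 - r) * g i 0 0 0 + r * g i 0 0 v" using h2 w0 by linarith
    moreover have "(1 - r) * g i 0 0 0 \<le> 0" using g0[of 0 0] r by (simp add: mult_nonneg_nonpos)
    ultimately have "0 \<le> r * g i 0 0 v" by linarith
    thus ?thesis using r by (simp add: zero_le_mult_iff)
  qed
  have "(1 - r) * g i x' y' 0 \<le> 0" using g0[of x' y'] r by (simp add: mult_nonneg_nonpos)
  moreover have "(1 - r) * g i 0 0 v \<ge> 0" using gv0 r by simp
  moreover have "g i x y v \<le> c" using c by (simp add: v_def)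
  ultimately show ?thesis using h1 h3 unfolding xy by (simp add: x'_def y'_def)
qed

lemma fscale:
  assumes "convex_on UNIV f" "f 0 = 0" "0 < r" "r \<le> 1"
  shows "f x \<le> r * f ((1/r) *\<^sub>R x)"
proof -
  have "f ((1 - r) *\<^sub>R 0 + r *\<^sub>R ((1/r) *\<^sub>R x)) \<le> (1 - r) * f 0 + r * f ((1/r) *\<^sub>R x)"
    by (rule convex_onD[OF assms(1)]) (use assms in auto)
  thus ?thesis using assms by simp
qed

lemma INF_scale:
  fixes A :: ereal
  assumes "0 < c" "\<And>u. u \<in> S \<Longrightarrow> A \<le> ereal (c * h u)"
  shows "A \<le> ereal c * (INF u\<in>S. ereal (h u))"
proof -
  have "A / ereal c \<le> (INF u\<in>S. ereal (h u))"
  proof (rule INF_greatest)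
    fix u assume "u \<in> S"
    then show "A / ereal c \<le> ereal (h u)" using assms
      by (subst ereal_divide_le_pos) auto
  qed
  thus ?thesis using assms by (subst (asm) ereal_divide_le_pos) auto
qed

lemma limit_gamma:
  fixes Z W :: ereal
  assumes g: "0 \<le> \<gamma>" "\<gamma> \<le> 1" and H: "\<And>r. \<gamma> < r \<Longrightarrow> r \<le> 1 \<Longrightarrow> Z / ereal r \<le> W"
    and Z1: "Z \<le> W"
  shows "Z / ereal \<gamma> \<le> W"
proof (cases Z)
  case MInf then show ?thesis using g by (cases "\<gamma> = 0") (auto simp: divide_ereal_def)
next
  case PInf then show ?thesis using Z1 by simp
next
  case (real z)
  show ?thesis
  proof (cases W)
    case PInf then show ?thesis by simp
  next
    case MInf then show ?thesis using Z1 real by simp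
  next
    case (real w)
    have Hr: "z \<le> w * r" if "\<gamma> < r" "r \<le> 1" for r
    proof -
      have "ereal (z / r) \<le> ereal w" using H[OF that] real \<open>Z = ereal z\<close> that g by simp
      thus ?thesis using that g by (simp add: divide_le_eq mult.commute)
    qed
    show ?thesis
    proof (cases "\<gamma> = 0")
      case True
      have "z \<le> 0"
      proof (rule ccontr)
        assume "\<not> z \<le> 0"
        define r where "r = min 1 (z / (2 * (\<bar>w\<bar> + 1)))"
        have rp: "0 < r" using \<open>\<not> z \<le> 0\<close> by (simp add: r_def)
        have "z \<le> w * r" using Hr[of r] rp True by (simp add: r_def)
        also have "\<dots> \<le> \<bar>w\<bar> * r" using rp by (simp add: abs_ge_self mult_right_mono)
        also have "\<dots> \<le> \<bar>w\<bar> * (z / (2 * (\<bar>w\<bar> + 1)))" by (rule mult_left_mono) (auto simp: r_def)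
        also have "\<dots> < z"
        proof -
          have "0 \<le> z * \<bar>w\<bar>" using \<open>\<not> z \<le> 0\<close> by simp
          hence "0 < z * \<bar>w\<bar> + z * 2" using \<open>\<not> z \<le> 0\<close> by linarith
          thus ?thesis using \<open>\<not> z \<le> 0\<close> by (simp add: field_simps)
        qed
        finally show False by simp
      qed
      then show ?thesis using True \<open>Z = ereal z\<close> real Z1
        by (cases "z = 0") (auto simp: divide_ereal_def)
    next
      case False
      have "z \<le> w * \<gamma>"
      proof (cases "\<gamma> = 1")
        case True then show ?thesis using Z1 \<open>Z = ereal z\<close> real by simp
      next
        case False
        show ?thesis
        proof (rule ccontr)
          assume nz: "\<not> z \<le> w * \<gamma>"
          define r where "r = min 1 (\<gamma> + (z - w * \<gamma>) / (2 * (\<bar>w\<bar> + 1)))"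
          have d: "0 < (z - w * \<gamma>) / (2 * (\<bar>w\<bar> + 1))" using nz by simp
          have rp: "\<gamma> < r" using d False g by (simp add: r_def)
          have "z \<le> w * r" using Hr[of r] rp by (simp add: r_def)
          also have "\<dots> = w * \<gamma> + w * (r - \<gamma>)" by (simp add: algebra_simps)
          also have "\<dots> \<le> w * \<gamma> + \<bar>w\<bar> * (r - \<gamma>)" using rp
            by (simp add: abs_ge_self mult_right_mono)
          also have "\<dots> \<le> w * \<gamma> + \<bar>w\<bar> * ((z - w * \<gamma>) / (2 * (\<bar>w\<bar> + 1)))"
            by (intro add_left_mono mult_left_mono) (auto simp: r_def)
          also have "\<dots> < z"
          proof -
            have "0 \<le> (z - w * \<gamma>) * \<bar>w\<bar>" using nz by simp
            thus ?thesis using nz by (simp add: field_simps)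
          qed
          finally show False by simp
        qed
      qed
      then show ?thesis using False g \<open>Z = ereal z\<close> real by (simp add: divide_le_eq mult.commute)
    qed
  qed
qed

lemma prod_set_mem: "u \<in> prod_set Ui \<longleftrightarrow> (\<forall>i. u $ i \<in> Ui i)"
  by (simp add: prod_set_def)

lemma prod_set_convex: "(\<forall>i. convex (Ui i)) \<Longrightarrow> convex (prod_set Ui)"
  unfolding convex_def by (auto simp: prod_set_mem)

lemma scale_mono:
  fixes U :: "'a::real_vector set"
  assumes "convex U" "0 \<in> U" "0 \<le> r'" "r' \<le> r"
  shows "(\<lambda>x. r' *\<^sub>R x) ` U \<subseteq> (\<lambda>x. r *\<^sub>R x) ` U"
proof
  fix z assume "z \<in> (\<lambda>x. r' *\<^sub>R x) ` U"
  then obtain x where x: "x \<in> U" "z = r' *\<^sub>R x" by auto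
  show "z \<in> (\<lambda>x. r *\<^sub>R x) ` U"
  proof (cases "r' = 0")
    case True then show ?thesis using x assms by (auto intro!: image_eqI[where x=0])
  next
    case False
    then have rp: "0 < r" using assms by simp
    have "(1 - r'/r) *\<^sub>R 0 + (r'/r) *\<^sub>R x \<in> U"
      using assms x rp by (intro convexD) auto
    then have "(r'/r) *\<^sub>R x \<in> U" by simp
    moreover have "z = r *\<^sub>R ((r'/r) *\<^sub>R x)" using x rp by simp
    ultimately show ?thesis by blast
  qed
qed

lemma gauge_basic:
  fixes U S :: "'a::real_vector set"
  assumes "convex U" "0 \<in> U" "S \<subseteq> U"
  shows "0 \<le> gauge_gamma U S" "gauge_gamma U S \<le> 1"
    "\<And>r. gauge_gamma U S < r \<Longrightarrow> S \<subseteq> (\<lambda>x. r *\<^sub>R x) ` U"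
proof -
  let ?A = "{r. r \<ge> 0 \<and> S \<subseteq> (\<lambda>x. r *\<^sub>R x) ` U}"
  have one: "1 \<in> ?A" using assms by simp
  have bdd: "bdd_below ?A" by (rule bdd_belowI[of _ 0]) auto
  show "0 \<le> gauge_gamma U S" unfolding gauge_gamma_def
    by (rule cInf_greatest) (use one in blast, auto)
  show "gauge_gamma U S \<le> 1" unfolding gauge_gamma_def
    using one bdd by (intro cInf_lower) auto
  fix r assume "gauge_gamma U S < r"
  then obtain r' where "r' \<in> ?A" "r' < r" using cInf_lessD[of ?A r] one
    unfolding gauge_gamma_def by blast
  then show "S \<subseteq> (\<lambda>x. r *\<^sub>R x) ` U" using scale_mono[OF assms(1,2), of r' r] by auto
qed

lemma claim_st:
  assumes h: "std_hyps Ui C b f1 f2 g" and r: "0 < r" "r \<le> 1"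
    and sub: "Pi_proj (prod_set Ui \<inter> C) \<subseteq> (\<lambda>x. r *\<^sub>R x) ` prod_set Ui"
  shows "z_st b f1 f2 g (prod_set Ui) / ereal r \<le> z_st b f1 f2 g (prod_set Ui \<inter> C)"
proof -
  have hf1: "convex_on UNIV f1" "f1 0 = 0" and hf2: "convex_on UNIV f2" "f2 0 = 0"
    and hg: "\<forall>i. \<forall>u\<in>prod_set Ui \<inter> C. g i 0 0 (u $ i) \<ge> 0"
    using h by (auto simp: std_hyps_def)
  have "z_st b f1 f2 g (prod_set Ui) \<le> ereal r * z_st b f1 f2 g (prod_set Ui \<inter> C)"
    unfolding z_st_def
  proof (rule Sup_least, clarify)
    fix x y assume feas: "\<forall>u\<in>prod_set Ui. \<forall>i. g i x y (u $ i) \<le> b $ i"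
    define x' where "x' = (1/r) *\<^sub>R x"
    define y' where "y' = (1/r) *\<^sub>R y"
    have feas': "\<forall>u\<in>prod_set Ui \<inter> C. \<forall>i. g i x' y' (u $ i) \<le> b $ i"
    proof (intro ballI allI)
      fix u i assume u: "u \<in> prod_set Ui \<inter> C"
      have "u \<in> Pi_proj (prod_set Ui \<inter> C)" using u
        by (auto simp: Pi_proj_def prod_set_mem block_proj_def)
      then obtain v where v: "v \<in> prod_set Ui" "u = r *\<^sub>R v" using sub by auto
      have "g i x y ((1/r) *\<^sub>R (u $ i)) \<le> b $ i" using feas v r by simp
      then show "g i x' y' (u $ i) \<le> b $ i" unfolding x'_def y'_def
        using key[OF h r] hg u by blast
    qed
    have "f1 x + f2 y \<le> r * (f1 x' + f2 y')"
      using fscale[OF hf1 r, of x] fscale[OF hf2 r, of y] by (simp add: x'_def y'_def algebra_simps)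
    then have "ereal (f1 x + f2 y) \<le> ereal r * ereal (f1 x' + f2 y')" by simp
    also have "\<dots> \<le> ereal r * Sup {ereal (f1 x + f2 y) | x y. \<forall>u\<in>prod_set Ui \<inter> C. \<forall>i. g i x y (u $ i) \<le> b $ i}"
      using feas' r by (intro ereal_mult_left_mono Sup_upper) auto
    finally show "ereal (f1 x + f2 y) \<le> ereal r * Sup {ereal (f1 x + f2 y) | x y. \<forall>u\<in>prod_set Ui \<inter> C. \<forall>i. g i x y (u $ i) \<le> b $ i}" .
  qed
  then show ?thesis using r by (subst ereal_divide_le_pos) auto
qed

lemma claim_ad:
  assumes h: "std_hyps Ui C b f1 f2 g" and r: "0 < r" "r \<le> 1"
    and sub: "prod_set Ui \<inter> C \<subseteq> (\<lambda>x. r *\<^sub>R x) ` prod_set Ui"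
  shows "z_ad b f1 f2 g (prod_set Ui) / ereal r \<le> z_ad b f1 f2 g (prod_set Ui \<inter> C)"
proof -
  have hf1: "convex_on UNIV f1" "f1 0 = 0" and hf2: "convex_on UNIV f2" "f2 0 = 0"
    and hg: "\<forall>i. \<forall>u\<in>prod_set Ui \<inter> C. g i 0 0 (u $ i) \<ge> 0"
    using h by (auto simp: std_hyps_def)
  let ?U = "prod_set Ui" and ?S = "prod_set Ui \<inter> C"
  have "z_ad b f1 f2 g ?U \<le> ereal r * z_ad b f1 f2 g ?S"
    unfolding z_ad_def
  proof (rule Sup_least, clarify)
    fix x and y :: "_ \<Rightarrow> _" assume feas: "\<forall>u\<in>?U. \<forall>i. g i x (y u) (u $ i) \<le> b $ i"
    define x' where "x' = (1/r) *\<^sub>R x"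
    define y' where "y' = (\<lambda>u. (1/r) *\<^sub>R y ((1/r) *\<^sub>R u))"
    have inU: "(1/r) *\<^sub>R u \<in> ?U" if uS: "u \<in> ?S" for u
    proof -
      obtain v where v: "v \<in> ?U" "u = r *\<^sub>R v" using sub uS by blast
      then show ?thesis using r by simp
    qed
    have feas': "\<forall>u\<in>?S. \<forall>i. g i x' (y' u) (u $ i) \<le> b $ i"
    proof (intro ballI allI)
      fix u i assume u: "u \<in> ?S"
      have "g i x (y ((1/r) *\<^sub>R u)) ((1/r) *\<^sub>R (u $ i)) \<le> b $ i" using feas inU[OF u] by auto
      then show "g i x' (y' u) (u $ i) \<le> b $ i" unfolding x'_def y'_def
        using key[OF h r] hg u by blast
    qed
    have e1: "f1 x \<le> r * f1 x'" using fscale[OF hf1 r, of x] by (simp add: x'_def)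
    have e2: "(INF u\<in>?U. ereal (f2 (y u))) \<le> ereal r * (INF u\<in>?S. ereal (f2 (y' u)))"
    proof (rule INF_scale[OF r(1)])
      fix u assume u: "u \<in> ?S"
      have "(INF u\<in>?U. ereal (f2 (y u))) \<le> ereal (f2 (y ((1/r) *\<^sub>R u)))"
        using inU[OF u] by (rule INF_lower)
      also have "\<dots> \<le> ereal (r * f2 (y' u))"
        using fscale[OF hf2 r, of "y ((1/r) *\<^sub>R u)"] by (simp add: y'_def)
      finally show "(INF u\<in>?U. ereal (f2 (y u))) \<le> ereal (r * f2 (y' u))" .
    qed
    have "ereal (f1 x) + (INF u\<in>?U. ereal (f2 (y u)))
        \<le> ereal (r * f1 x') + ereal r * (INF u\<in>?S. ereal (f2 (y' u)))"
      using e1 e2 by (intro add_mono) auto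
    also have "\<dots> = ereal r * (ereal (f1 x') + (INF u\<in>?S. ereal (f2 (y' u))))"
      by (subst ereal_distrib_left) auto
    also have "\<dots> \<le> ereal r * Sup {ereal (f1 x) + (INF u\<in>?S. ereal (f2 (y u))) | x y.
      \<forall>u\<in>?S. \<forall>i. g i x (y u) (u $ i) \<le> b $ i}"
      using feas' r by (intro ereal_mult_left_mono Sup_upper) auto
    finally show "ereal (f1 x) + (INF u\<in>?U. ereal (f2 (y u))) \<le> ereal r * Sup {ereal (f1 x) + (INF u\<in>?S. ereal (f2 (y u))) | x y.
      \<forall>u\<in>?S. \<forall>i. g i x (y u) (u $ i) \<le> b $ i}" .
  qed
  then show ?thesis using r by (subst ereal_divide_le_pos) auto
qed



definition Sc :: "'p::finite \<Rightarrow> real \<Rightarrow> (real^'p^'m::finite) set" where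
  "Sc k c = {u. \<forall>i. \<bar>u $ i $ k\<bar> \<le> c}"

lemma Sc_nonempty: "0 \<le> c \<Longrightarrow> 0 \<in> Sc k c" by (simp add: Sc_def)

lemma Sc_const: "(\<chi> i j. c) \<in> Sc k c \<longleftrightarrow> \<bar>c\<bar> \<le> c" by (simp add: Sc_def)

lemma scale_Sc:
  assumes "0 < r" shows "(\<lambda>x. r *\<^sub>R x) ` (Sc k 1 :: (real^'p::finite^'m::finite) set) = Sc k r"
proof
  show "(\<lambda>x. r *\<^sub>R x) ` (Sc k 1 :: (real^'p^'m) set) \<subseteq> Sc k r"
    using assms by (auto simp: Sc_def abs_mult)
  show "Sc k r \<subseteq> (\<lambda>x. r *\<^sub>R x) ` (Sc k 1 :: (real^'p^'m) set)"
  proof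
    fix u :: "real^'p^'m" assume u: "u \<in> Sc k r"
    have "(1/r) *\<^sub>R u \<in> Sc k 1" using u assms by (auto simp: Sc_def abs_mult field_simps)
    moreover have "u = r *\<^sub>R ((1/r) *\<^sub>R u)" using assms by simp
    ultimately show "u \<in> (\<lambda>x. r *\<^sub>R x) ` Sc k 1" by blast
  qed
qed

lemma gauge_Sc:
  assumes "0 < c" shows "gauge_gamma (Sc k 1 :: (real^'p::finite^'m::finite) set) (Sc k c) = c"
  unfolding gauge_gamma_def
proof (rule cInf_eq_minimum)
  show "c \<in> {r. 0 \<le> r \<and> Sc k c \<subseteq> (\<lambda>x. r *\<^sub>R x) ` (Sc k 1 :: (real^'p^'m) set)}"
    using assms scale_Sc[OF assms, of k] by auto
  fix r assume r: "r \<in> {r. 0 \<le> r \<and> Sc k c \<subseteq> (\<lambda>x. r *\<^sub>R x) ` (Sc k 1 :: (real^'p^'m) set)}"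
  have "(\<chi> i j. c) \<in> (Sc k c :: (real^'p^'m) set)" using assms by (simp add: Sc_def)
  then obtain v :: "real^'p^'m" where v: "v \<in> Sc k 1" "(\<chi> i j. c) = r *\<^sub>R v" using r by blast
  obtain i :: 'm where True by simp
  have "c = r * (v $ i $ k)" using arg_cong[OF v(2), of "\<lambda>u. u $ i $ k"] by simp
  also have "\<dots> \<le> r * 1" using r v(1) by (intro mult_left_mono) (auto simp: Sc_def abs_le_iff)
  finally show "c \<le> r" by simp
qed

lemma Pi_proj_Sc: "Pi_proj (Sc k c :: (real^'p::finite^'m::finite) set) = Sc k c"
proof -
  have "block_proj (Sc k c :: (real^'p^'m) set) i = {w. \<bar>w $ k\<bar> \<le> c}" for i
  proof
    show "block_proj (Sc k c :: (real^'p^'m) set) i \<subseteq> {w. \<bar>w $ k\<bar> \<le> c}"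
      by (auto simp: block_proj_def Sc_def)
    show "{w. \<bar>w $ k\<bar> \<le> c} \<subseteq> block_proj (Sc k c :: (real^'p^'m) set) i"
    proof
      fix w :: "real^'p" assume "w \<in> {w. \<bar>w $ k\<bar> \<le> c}"
      then have "(\<chi> j. w) \<in> (Sc k c :: (real^'p^'m) set)" by (simp add: Sc_def)
      moreover have "w = (\<chi> j. w :: real^'p^'m) $ i" by simp
      ultimately show "w \<in> block_proj (Sc k c :: (real^'p^'m) set) i" unfolding block_proj_def by blast
    qed
  qed
  then show ?thesis by (auto simp: Pi_proj_def prod_set_def Sc_def)
qed

lemma zst_Sc:
  fixes a :: "'n1::finite" and k :: "'p::finite"
  assumes "0 < c"
  shows "z_st (\<chi> i. 1) (\<lambda>x. x $ a) (\<lambda>_::real^'n2::finite. 0) (\<lambda>i x y w. x $ a * w $ k)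
           (Sc k c :: (real^'p^'m::finite) set) = ereal (1/c)"
  unfolding z_st_def
proof (rule antisym)
  show "Sup {ereal (x $ a + 0) |x (y::real^'n2). \<forall>u\<in>(Sc k c :: (real^'p^'m) set). \<forall>i. x $ a * u $ i $ k \<le> (\<chi> i. 1) $ i}
        \<le> ereal (1 / c)"
  proof (rule Sup_least, clarify)
    fix x :: "real^'n1" and y :: "real^'n2"
    assume "\<forall>u\<in>(Sc k c :: (real^'p^'m) set). \<forall>i. x $ a * u $ i $ k \<le> (\<chi> i. 1) $ i"
    moreover have "(\<chi> i j. c) \<in> (Sc k c :: (real^'p^'m) set)" using assms by (simp add: Sc_def)
    ultimately have "x $ a * c \<le> 1" by fastforce
    then show "ereal (x $ a + 0) \<le> ereal (1 / c)" using assms by (simp add: field_simps)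
  qed
  have feas: "\<forall>u\<in>(Sc k c :: (real^'p^'m) set). \<forall>i. (\<chi> j. 1/c :: real^'n1) $ a * u $ i $ k \<le> (\<chi> i. 1 :: real^'m) $ i"
  proof (intro ballI allI)
    fix u :: "real^'p^'m" and i assume "u \<in> Sc k c"
    then have "u $ i $ k \<le> c" by (auto simp: Sc_def abs_le_iff)
    then show "(\<chi> j. 1/c :: real^'n1) $ a * u $ i $ k \<le> (\<chi> i. 1 :: real^'m) $ i"
      using assms by (simp add: field_simps)
  qed
  show "ereal (1 / c) \<le> Sup {ereal (x $ a + 0) |x (y::real^'n2). \<forall>u\<in>(Sc k c :: (real^'p^'m) set). \<forall>i. x $ a * u $ i $ k \<le> (\<chi> i. 1) $ i}"
    apply (rule Sup_upper, rule CollectI)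
    apply (rule exI[of _ "\<chi> j. 1/c"], rule exI[of _ 0])
    using feas by simp
qed

lemma zad_Sc:
  fixes a :: "'n1::finite" and k :: "'p::finite"
  assumes "0 < c"
  shows "z_ad (\<chi> i. 1) (\<lambda>x. x $ a) (\<lambda>_::real^'n2::finite. 0) (\<lambda>i x y w. x $ a * w $ k)
           (Sc k c :: (real^'p^'m::finite) set) = ereal (1/c)"
  unfolding z_ad_def
proof -
  have inf0: "(INF u\<in>(Sc k c :: (real^'p^'m) set). ereal 0) = 0" for y :: "real^'p^'m \<Rightarrow> real^'n2"
    using Sc_nonempty[of c k] assms by (subst INF_const) auto
  show "Sup {ereal (x $ a) + (INF u\<in>(Sc k c :: (real^'p^'m) set). ereal 0) |x (y::real^'p^'m \<Rightarrow> real^'n2).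
        \<forall>u\<in>(Sc k c :: (real^'p^'m) set). \<forall>i. x $ a * (u $ i) $ k \<le> (\<chi> i. 1) $ i} = ereal (1 / c)"
  proof (rule antisym)
    show "Sup {ereal (x $ a) + (INF u\<in>(Sc k c :: (real^'p^'m) set). ereal 0) |x (y::real^'p^'m \<Rightarrow> real^'n2).
        \<forall>u\<in>(Sc k c :: (real^'p^'m) set). \<forall>i. x $ a * (u $ i) $ k \<le> (\<chi> i. 1) $ i} \<le> ereal (1 / c)"
    proof (rule Sup_least, clarify)
      fix x :: "real^'n1" and y :: "real^'p^'m \<Rightarrow> real^'n2"
      assume "\<forall>u\<in>(Sc k c :: (real^'p^'m) set). \<forall>i. x $ a * u $ i $ k \<le> (\<chi> i. 1) $ i"
      moreover have "(\<chi> i j. c) \<in> (Sc k c :: (real^'p^'m) set)" using assms by (simp add: Sc_def)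
      ultimately have "x $ a * c \<le> 1" by fastforce
      then show "ereal (x $ a) + (INF u\<in>(Sc k c :: (real^'p^'m) set). ereal 0) \<le> ereal (1 / c)"
        using assms inf0 by (simp add: field_simps)
    qed
    have feas: "\<forall>u\<in>(Sc k c :: (real^'p^'m) set). \<forall>i. (\<chi> j. 1/c :: real^'n1) $ a * u $ i $ k \<le> (\<chi> i. 1 :: real^'m) $ i"
    proof (intro ballI allI)
      fix u :: "real^'p^'m" and i assume "u \<in> Sc k c"
      then have "u $ i $ k \<le> c" by (auto simp: Sc_def abs_le_iff)
      then show "(\<chi> j. 1/c :: real^'n1) $ a * u $ i $ k \<le> (\<chi> i. 1 :: real^'m) $ i"
        using assms by (simp add: field_simps)
    qed
    show "ereal (1 / c) \<le> Sup {ereal (x $ a) + (INF u\<in>(Sc k c :: (real^'p^'m) set). ereal 0) |x (y::real^'p^'m \<Rightarrow> real^'n2).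
        \<forall>u\<in>(Sc k c :: (real^'p^'m) set). \<forall>i. x $ a * (u $ i) $ k \<le> (\<chi> i. 1) $ i}"
      apply (rule Sup_upper, rule CollectI)
      apply (rule exI[of _ "\<chi> j. 1/c"], rule exI[of _ "\<lambda>_. 0"])
      using feas inf0 by simp
  qed
qed



lemma prod_Sc: "prod_set (\<lambda>_::'m::finite. {w::real^'p::finite. \<bar>w $ k\<bar> \<le> c}) = Sc k c"
  by (auto simp: prod_set_def Sc_def)

lemma Sc_inter: "c \<le> d \<Longrightarrow> Sc k d \<inter> Sc k c = Sc k c"
  by (auto simp: Sc_def intro: order_trans)

lemma hyps_inst:
  fixes a :: "'n1::finite" and k :: "'p::finite"
  assumes "0 < c" "c \<le> 1"
  shows "std_hyps (\<lambda>_::'m::finite. {w::real^'p. \<bar>w $ k\<bar> \<le> 1}) (Sc k c) (\<chi> i. 1)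
     (\<lambda>x::real^'n1. x $ a) (\<lambda>_::real^'n2::finite. 0) (\<lambda>i x y w. x $ a * w $ k)"
  unfolding std_hyps_def
proof (intro conjI allI ballI)
  show "convex {w::real^'p. \<bar>w $ k\<bar> \<le> 1}"
    unfolding convex_def
  proof (intro ballI allI impI, simp)
    fix x y :: "real^'p" and u v :: real
    assume "\<bar>x $ k\<bar> \<le> 1" "\<bar>y $ k\<bar> \<le> 1" "0 \<le> u" "0 \<le> v" "u + v = 1"
    then have "\<bar>u * x $ k + v * y $ k\<bar> \<le> u * \<bar>x $ k\<bar> + v * \<bar>y $ k\<bar>"
      by (metis abs_mult abs_of_nonneg abs_triangle_ineq)
    also have "\<dots> \<le> u * 1 + v * 1" using \<open>\<bar>x $ k\<bar> \<le> 1\<close> \<open>\<bar>y $ k\<bar> \<le> 1\<close> \<open>0 \<le> u\<close> \<open>0 \<le> v\<close>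
      by (intro add_mono mult_left_mono) auto
    finally show "\<bar>u * x $ k + v * y $ k\<bar> \<le> 1" using \<open>u + v = 1\<close> by simp
  qed
  show "0 \<in> prod_set (\<lambda>_::'m. {w::real^'p. \<bar>w $ k\<bar> \<le> 1}) \<inter> Sc k c"
    using assms by (simp add: prod_Sc Sc_def)
  show "convex_on UNIV (\<lambda>x::real^'n1. x $ a)" by (simp add: convex_on_def)
  show "convex_on UNIV (\<lambda>_::real^'n2. 0::real)" by (simp add: convex_on_def)
  show "(\<lambda>x::real^'n1. x $ a) 0 = 0" "(\<lambda>_::real^'n2. 0::real) 0 = 0" by simp_all
  fix i :: 'm
  show "concave_on UNIV (\<lambda>z. (\<lambda>i x y w. x $ a * w $ k) i (fst z) (snd z) w)" for w :: "real^'p"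
    by (simp add: concave_on_iff algebra_simps)
  show "convex_on UNIV (\<lambda>w. (\<lambda>i x y w. x $ a * w $ k) i x y w)" for x :: "real^'n1" and y :: "real^'n2"
    by (simp add: convex_on_def algebra_simps)
  show "(\<lambda>i x y w. x $ a * w $ k) i x y 0 \<le> 0" for x :: "real^'n1" and y :: "real^'n2" by simp
  show "0 \<le> (\<lambda>i x (y::real^'n2) w. x $ a * w $ k) i 0 0 (u $ i)" for u :: "real^'p^'m" by simp
qed

theorem theorem12:
  fixes Ui :: "'m::finite \<Rightarrow> (real^'p::finite) set"
    and C :: "(real^'p^'m) set"
    and b :: "real^'m"
    and f1 :: "real^'n1::finite \<Rightarrow> real"
    and f2 :: "real^'n2::finite \<Rightarrow> real"
    and g :: "'m \<Rightarrow> real^'n1 \<Rightarrow> real^'n2 \<Rightarrow> real^'p \<Rightarrow> real"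
  assumes hyps: "std_hyps Ui C b f1 f2 g"
    and acp_pos: "z_ad b f1 f2 g (prod_set Ui \<inter> C) > 0"
    and ro_fin: "z_st b f1 f2 g (prod_set Ui) < \<infinity>"
  shows "z_st b f1 f2 g (prod_set Ui)
           / ereal (gauge_gamma (prod_set Ui) (Pi_proj (prod_set Ui \<inter> C)))
           \<le> z_st b f1 f2 g (prod_set Ui \<inter> C)
       \<and> z_ad b f1 f2 g (prod_set Ui)
           / ereal (gauge_gamma (prod_set Ui) (prod_set Ui \<inter> C))
           \<le> z_ad b f1 f2 g (prod_set Ui \<inter> C)
       \<and> (\<forall>\<gamma>0::real. 0 < \<gamma>0 \<and> \<gamma>0 \<le> 1 \<longrightarrow>
            (\<exists>(Ui'::'m \<Rightarrow> (real^'p) set) (C'::(real^'p^'m) set) (b'::real^'m)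
               (f1'::real^'n1 \<Rightarrow> real) (f2'::real^'n2 \<Rightarrow> real)
               (g'::'m \<Rightarrow> real^'n1 \<Rightarrow> real^'n2 \<Rightarrow> real^'p \<Rightarrow> real).
               std_hyps Ui' C' b' f1' f2' g'
             \<and> z_ad b' f1' f2' g' (prod_set Ui' \<inter> C') > 0
             \<and> z_st b' f1' f2' g' (prod_set Ui') < \<infinity>
             \<and> gauge_gamma (prod_set Ui') (Pi_proj (prod_set Ui' \<inter> C')) = \<gamma>0
             \<and> gauge_gamma (prod_set Ui') (prod_set Ui' \<inter> C') = \<gamma>0
             \<and> z_st b' f1' f2' g' (prod_set Ui' \<inter> C')
                 = z_st b' f1' f2' g' (prod_set Ui') / ereal \<gamma>0
             \<and> z_ad b' f1' f2' g' (prod_set Ui' \<inter> C')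
                 = z_ad b' f1' f2' g' (prod_set Ui') / ereal \<gamma>0))"
  proof -
  let ?U = "prod_set Ui" and ?S = "prod_set Ui \<inter> C"
  have hU: "convex ?U" "0 \<in> ?U" using hyps prod_set_convex by (auto simp: std_hyps_def)
  have sub1: "Pi_proj ?S \<subseteq> ?U"
  proof
    fix x assume "x \<in> Pi_proj ?S"
    then have "\<forall>i. x $ i \<in> (\<lambda>u. u $ i) ` ?S" by (simp add: Pi_proj_def prod_set_mem block_proj_def)
    show "x \<in> ?U" unfolding prod_set_mem
    proof
      fix i
      obtain u where "u \<in> ?S" "x $ i = u $ i" using \<open>\<forall>i. x $ i \<in> (\<lambda>u. u $ i) ` ?S\<close> by blast
      then show "x $ i \<in> Ui i" by (simp add: prod_set_mem)
    qed
  qed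
  have sub2: "?S \<subseteq> ?U" by simp
  have one: "\<And>A::(real^'p^'m) set. (\<lambda>x. 1 *\<^sub>R x) ` A = A" by simp
  have P1: "z_st b f1 f2 g ?U / ereal (gauge_gamma ?U (Pi_proj ?S)) \<le> z_st b f1 f2 g ?S"
  proof (rule limit_gamma[OF gauge_basic(1,2)[OF hU sub1]])
    fix r assume r: "gauge_gamma ?U (Pi_proj ?S) < r" "r \<le> 1"
    have "0 < r" using r gauge_basic(1)[OF hU sub1] by linarith
    then show "z_st b f1 f2 g ?U / ereal r \<le> z_st b f1 f2 g ?S"
      using claim_st[OF hyps _ r(2) gauge_basic(3)[OF hU sub1 r(1)]] by blast
  next
    show "z_st b f1 f2 g ?U \<le> z_st b f1 f2 g ?S"
    proof -
      have "z_st b f1 f2 g ?U / ereal 1 \<le> z_st b f1 f2 g ?S"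
        using claim_st[OF hyps _ order_refl, of] sub1 one by simp
      then show ?thesis by (metis ereal_divide_one one_ereal_def)
    qed
  qed
  have P2: "z_ad b f1 f2 g ?U / ereal (gauge_gamma ?U ?S) \<le> z_ad b f1 f2 g ?S"
  proof (rule limit_gamma[OF gauge_basic(1,2)[OF hU sub2]])
    fix r assume r: "gauge_gamma ?U ?S < r" "r \<le> 1"
    have "0 < r" using r gauge_basic(1)[OF hU sub2] by linarith
    then show "z_ad b f1 f2 g ?U / ereal r \<le> z_ad b f1 f2 g ?S"
      using claim_ad[OF hyps _ r(2) gauge_basic(3)[OF hU sub2 r(1)]] by blast
  next
    show "z_ad b f1 f2 g ?U \<le> z_ad b f1 f2 g ?S"
    proof -
      have "z_ad b f1 f2 g ?U / ereal 1 \<le> z_ad b f1 f2 g ?S"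
        using claim_ad[OF hyps _ order_refl, of] sub2 one by simp
      then show ?thesis by (metis ereal_divide_one one_ereal_def)
    qed
  qed
  have P3: "\<exists>(Ui'::'m \<Rightarrow> (real^'p) set) (C'::(real^'p^'m) set) (b'::real^'m)
               (f1'::real^'n1 \<Rightarrow> real) (f2'::real^'n2 \<Rightarrow> real)
               (g'::'m \<Rightarrow> real^'n1 \<Rightarrow> real^'n2 \<Rightarrow> real^'p \<Rightarrow> real).
               std_hyps Ui' C' b' f1' f2' g'
             \<and> z_ad b' f1' f2' g' (prod_set Ui' \<inter> C') > 0
             \<and> z_st b' f1' f2' g' (prod_set Ui') < \<infinity>
             \<and> gauge_gamma (prod_set Ui') (Pi_proj (prod_set Ui' \<inter> C')) = \<gamma>0
             \<and> gauge_gamma (prod_set Ui') (prod_set Ui' \<inter> C') = \<gamma>0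
             \<and> z_st b' f1' f2' g' (prod_set Ui' \<inter> C')
                 = z_st b' f1' f2' g' (prod_set Ui') / ereal \<gamma>0
             \<and> z_ad b' f1' f2' g' (prod_set Ui' \<inter> C')
                 = z_ad b' f1' f2' g' (prod_set Ui') / ereal \<gamma>0"
    if g0: "0 < \<gamma>0" "\<gamma>0 \<le> 1" for \<gamma>0 :: real
  proof -
    fix a :: 'n1 and k :: 'p
    let ?Ui = "\<lambda>_::'m. {w::real^'p. \<bar>w $ k\<bar> \<le> 1}"
    have e1: "prod_set ?Ui = Sc k 1" by (rule prod_Sc)
    have e2: "prod_set ?Ui \<inter> Sc k \<gamma>0 = Sc k \<gamma>0" using e1 Sc_inter[OF g0(2)] by simp
    show ?thesis
      apply (rule exI[of _ ?Ui], rule exI[of _ "Sc k \<gamma>0"], rule exI[of _ "\<chi> i. 1"],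
             rule exI[of _ "\<lambda>x::real^'n1. x $ a"], rule exI[of _ "\<lambda>_::real^'n2. 0"],
             rule exI[of _ "\<lambda>i x y w. x $ a * w $ k"])
      using hyps_inst[OF g0, of k a] g0
      by (simp add: e1 Sc_inter[OF g0(2)] zst_Sc zad_Sc gauge_Sc Pi_proj_Sc)
  qed
  show ?thesis using P1 P2 P3 by blast
qed

end
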